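(* Let $1\le k\le n-k$, $\mathfrak{g}=\mathfrak{sl}_n(\mathbb{C})$, and let $I=\{i_1<\cdots<i_k\}$, $J=\{j_1<\cdots<j_k\}$ be distinct subsets of $\{1,\dots,n\}$ with $r=|I\cap J|$. Suppose there is a dominant integral weight $\nu$ such that $\nu+\lambda_I$ and $\nu+\lambda_J$ are both dominant integral and $f_{\mathfrak{C}_p,I}(\nu)=f_{\mathfrak{C}_p,J}(\nu)$ for $2\le p\le k$. Then $r=0$.
   Context: $X_{ij}=E_{ij}$ ($i\ne j$), $X_{ii}=E_{ii}-\frac1n\sum_lE_{ll}$; $\mathfrak{C}_p=\sum_{i_1,\dots,i_p=1}^nX_{i_1i_2}\cdots X_{i_pi_1}\in Z(\mathfrak{g})$. $\omega_1,\dots,\omega_{n-1}$ are the fundamental weights, $\omega_0=\omega_n=0$, and $\lambda_I=\sum_{t=1}^k(\omega_{i_t}-\omega_{i_t-1})$. For a weight $\mu$, $\chi_\mu$ is the infinitesimal central character of the irreducible highest weight module $V_\mu$, and $f_{\mathfrak{C}_p,I}(\nu)=\chi_{\nu+\lambda_I}(\mathfrak{C}_p)-\chi_\nu(\mathfrak{C}_p)-\chi_{\omega_k}(\mathfrak{C}_p)$. *)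

theory Defs
  imports Complex_Main
begin

text \<open>
  Letters (i,j) with 1 <= i,j <= n stand for the matrix units E_ij of gl_n.
  A word w = [x_1,...,x_m] stands for the product x_1 x_2 ... x_m in U(gl_n).
  Given a gl_n weight h (h i = eigenvalue of E_ii on the highest weight vector v),
  vcoef h w is the coefficient of v in w.v inside the Verma module M(h), computed
  by moving raising letters (i<j) to the right via E_ab E_cd = E_cd E_ab + [E_ab,E_cd],
  [E_ab,E_cd] = delta_bc E_ad - delta_da E_cb.

  vc_aux h u t: u is the reversed prefix, t is a suffix free of raising letters;
  the value is the coefficient of v in (rev u @ t).v.
\<close>

definition raising :: "nat \<times> nat \<Rightarrow> bool" where
  "raising x \<longleftrightarrow> fst x < snd x"

fun Mpot :: "(nat \<times> nat) list \<Rightarrow> nat" where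
  "Mpot [] = 0"
| "Mpot (a # w) = (if raising a then length w else 0) + Mpot w"

fun Rcnt :: "(nat \<times> nat) list \<Rightarrow> nat" where
  "Rcnt [] = 0"
| "Rcnt (a # w) = (if raising a then 1 else 0) + Rcnt w"

lemma Rcnt_append: "Rcnt (A @ B) = Rcnt A + Rcnt B"
  by (induction A) auto

lemma Mpot_append: "Mpot (A @ B) = Mpot A + Rcnt A * length B + Mpot B"
  by (induction A) (auto simp: algebra_simps)

function vc_aux :: "(nat \<Rightarrow> complex) \<Rightarrow> (nat \<times> nat) list \<Rightarrow> (nat \<times> nat) list \<Rightarrow> complex" where
  "vc_aux h [] t =
     (if (\<forall>x \<in> set t. fst x = snd x) then (\<Prod>x\<leftarrow>t. h (fst x)) else 0)"
| "vc_aux h (x # u) t =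
     (if \<not> raising x then vc_aux h u (x # t)
      else (case t of
              [] \<Rightarrow> 0
            | y # t' \<Rightarrow>
                (if raising y then 0
                 else vc_aux h (x # y # u) t'
                      + (if snd x = fst y then vc_aux h ((fst x, snd y) # u) t' else 0)
                      - (if snd y = fst x then vc_aux h ((fst y, snd x) # u) t' else 0))))"
  by pat_completeness auto
termination
  by (relation "measures [\<lambda>(h,u,t). length u + length t,
                          \<lambda>(h,u,t). Mpot (rev u @ t),
                          \<lambda>(h,u,t). length u]")
     (auto simp: Mpot_append Rcnt_append algebra_simps)

definition vcoef :: "(nat \<Rightarrow> complex) \<Rightarrow> (nat \<times> nat) list \<Rightarrow> complex" where
  "vcoef h w = vc_aux h (rev w) []"

text \<open>X_ij = E_ij (i /= j), X_ii = E_ii - (1/n) sum_l E_ll, as linear combinations of letters.\<close>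
definition Xexp :: "nat \<Rightarrow> nat \<times> nat \<Rightarrow> ((nat \<times> nat) \<times> complex) list" where
  "Xexp n x = (if fst x \<noteq> snd x then [(x, 1)]
               else (x, 1) # map (\<lambda>l. ((l, l), - 1 / of_nat n)) [1..<n+1])"

text \<open>Coefficient of v in X_{x_1} ... X_{x_m} . v (multilinear expansion).\<close>
definition vcoefX :: "nat \<Rightarrow> (nat \<Rightarrow> complex) \<Rightarrow> (nat \<times> nat) list \<Rightarrow> complex" where
  "vcoefX n h xs = sum_list (map (\<lambda>c. prod_list (map snd c) * vcoef h (map fst c))
                                 (product_lists (map (Xexp n) xs)))"

definition cycword :: "nat list \<Rightarrow> (nat \<times> nat) list" where
  "cycword is = map (\<lambda>q. (is ! q, is ! ((q + 1) mod length is))) [0..<length is]"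

text \<open>
  sl_n weights are given by Dynkin labels: mu i is the coefficient of omega_i (1 <= i <= n-1).
  The fundamental weight omega_i corresponds to the gl_n weight (1,...,1,0,...,0) (i ones);
  any gl_n lift gives the same action of the X_ij.
\<close>
definition gl_lift :: "nat \<Rightarrow> (nat \<Rightarrow> int) \<Rightarrow> nat \<Rightarrow> complex" where
  "gl_lift n mu j = of_int (\<Sum>i\<in>{j..n-1}. mu i)"

text \<open>chi_mu(C_p): scalar by which C_p = sum X_{i1 i2} ... X_{ip i1} acts on V_mu.\<close>
definition chi :: "nat \<Rightarrow> (nat \<Rightarrow> int) \<Rightarrow> nat \<Rightarrow> complex" where
  "chi n mu p = sum_list (map (\<lambda>is. vcoefX n (gl_lift n mu) (cycword is))
                               (List.n_lists p [1..<n+1]))"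

definition omega :: "nat \<Rightarrow> nat \<Rightarrow> nat \<Rightarrow> int" where
  "omega n i = (\<lambda>j. if 1 \<le> i \<and> i \<le> n - 1 \<and> j = i then 1 else 0)"

definition wadd :: "(nat \<Rightarrow> int) \<Rightarrow> (nat \<Rightarrow> int) \<Rightarrow> nat \<Rightarrow> int" where
  "wadd a b = (\<lambda>j. a j + b j)"

definition lambdaI :: "nat \<Rightarrow> nat set \<Rightarrow> nat \<Rightarrow> int" where
  "lambdaI n I = (\<lambda>j. \<Sum>i\<in>I. omega n i j - omega n (i - 1) j)"

definition dominant_integral :: "nat \<Rightarrow> (nat \<Rightarrow> int) \<Rightarrow> bool" where
  "dominant_integral n mu \<longleftrightarrow> (\<forall>i \<in> {1..n-1}. 0 \<le> mu i)"

definition fC :: "nat \<Rightarrow> nat \<Rightarrow> nat \<Rightarrow> nat set \<Rightarrow> (nat \<Rightarrow> int) \<Rightarrow> complex" where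
  "fC n k p I nu = chi n (wadd nu (lambdaI n I)) p - chi n nu p - chi n (omega n k) p"

end

theory Submission
  imports Defs "HOL-Computational_Algebra.Polynomial_FPS"
begin

definition NR :: "(nat \<times> nat) list \<Rightarrow> bool" where
  "NR t \<longleftrightarrow> (\<forall>x\<in>set t. \<not> raising x)"

definition comm :: "((nat \<times> nat) \<Rightarrow> complex) \<Rightarrow> nat \<times> nat \<Rightarrow> nat \<times> nat \<Rightarrow> complex" where
  "comm g x y = (if snd x = fst y then g (fst x, snd y) else 0)
              - (if snd y = fst x then g (fst y, snd x) else 0)"

lemma vc_aux_shift: "NR t \<Longrightarrow> vc_aux h (t @ u) s = vc_aux h u (rev t @ s)"
  by (induction t arbitrary: s) (auto simp: NR_def)

lemma vc_aux_N: "NR t \<Longrightarrow> vc_aux h u t = vcoef h (rev u @ t)"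
proof -
  assume "NR t"
  hence "NR (rev t)" by (simp add: NR_def)
  thus ?thesis unfolding vcoef_def using vc_aux_shift[of "rev t" h u "[]"] by simp
qed

lemma PhiD:
  assumes "raising r" "\<not> raising y" "NR t"
  shows "vcoef h (Q @ r # y # t) = vcoef h (Q @ y # r # t) + comm (\<lambda>m. vcoef h (Q @ m # t)) r y"
proof -
  have t2: "NR (y # t)" using assms by (simp add: NR_def)
  have "vcoef h (Q @ r # y # t) = vc_aux h (r # rev Q) (y # t)"
    using vc_aux_N[OF t2, of h "r # rev Q"] by simp
  also have "\<dots> = vc_aux h (r # y # rev Q) t
      + (if snd r = fst y then vc_aux h ((fst r, snd y) # rev Q) t else 0)
      - (if snd y = fst r then vc_aux h ((fst y, snd r) # rev Q) t else 0)"
    using assms by simp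
  also have "\<dots> = vcoef h (Q @ y # r # t) + comm (\<lambda>m. vcoef h (Q @ m # t)) r y"
    using vc_aux_N[OF assms(3)] by (simp add: comm_def)
  finally show ?thesis .
qed

lemma PhiZ: "raising r \<Longrightarrow> vcoef h (Q @ [r]) = 0"
  by (simp add: vcoef_def)

lemma PhiN: "NR t \<Longrightarrow> vcoef h t = (if (\<forall>x \<in> set t. fst x = snd x) then (\<Prod>x\<leftarrow>t. h (fst x)) else 0)"
  using vc_aux_N[of t h "[]"] by simp

lemma Phi_nil: "vcoef h [] = 1"
  by (simp add: vcoef_def)

lemma last_raising_split:
  "\<not> NR w \<Longrightarrow> \<exists>P r t. w = P @ r # t \<and> raising r \<and> NR t"
proof (induction w rule: rev_induct)
  case Nil thus ?case by (simp add: NR_def)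
next
  case (snoc x xs)
  show ?case
  proof (cases "raising x")
    case True thus ?thesis by (intro exI[of _ xs] exI[of _ x] exI[of _ "[]"]) (simp add: NR_def)
  next
    case False
    hence "\<not> NR xs" using snoc.prems by (auto simp: NR_def)
    then obtain P r t where "xs = P @ r # t" "raising r" "NR t" using snoc.IH by blast
    thus ?thesis using False by (intro exI[of _ P] exI[of _ r] exI[of _ "t @ [x]"]) (simp add: NR_def)
  qed
qed

lemma comm_add: "comm (\<lambda>m. f m + g m) x y = comm f x y + comm g x y"
  by (simp add: comm_def)
lemma comm_diff: "comm (\<lambda>m. f m - g m) x y = comm f x y - comm g x y"
  by (simp add: comm_def)
lemma comm_swap: "comm (\<lambda>m. comm (\<lambda>m'. F m m') r b) x y = comm (\<lambda>m'. comm (\<lambda>m. F m m') x y) r b"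
  by (simp add: comm_def)
lemma comm_anti: "comm g y x = - comm g x y"
  by (simp add: comm_def)
lemma comm_cong_nr:
  assumes "\<not> raising x" "\<not> raising y" "\<And>m. \<not> raising m \<Longrightarrow> g m = g' m"
  shows "comm g x y = comm g' x y"
  using assms by (auto simp: comm_def raising_def)
lemma comm_zero_r:
  assumes "raising x" "raising y" "\<And>m. raising m \<Longrightarrow> g m = 0"
  shows "comm g x y = 0"
  using assms by (auto simp: comm_def raising_def)
lemma jacobi1:
  "comm (\<lambda>m. comm G m y) x b + comm (\<lambda>m. comm G x m) y b = comm (\<lambda>m. comm G m b) x y"
  by (auto simp: comm_def)
lemma jacobi2:
  "comm (\<lambda>m. comm G m y) z x + comm (\<lambda>m. comm G x m) z y = comm (\<lambda>m. comm G z m) x y"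
  by (auto simp: comm_def)

lemma Mpot_swap1:
  assumes "raising r" "\<not> raising b"
  shows "Mpot (Q @ b # r # S) < Mpot (Q @ r # b # S)"
  using assms by (simp add: Mpot_append)

lemma Phi_zero_lower:
  assumes "NR A" "NR B" "\<not> raising m" "fst m \<noteq> snd m"
  shows "vcoef h (A @ m # B) = 0"
proof -
  have "NR (A @ m # B)" using assms by (auto simp: NR_def)
  thus ?thesis using PhiN assms(4) by fastforce
qed

lemma psi_swap:
  assumes "NR A" "NR B" "\<not> raising x" "\<not> raising y"
  shows "vcoef h (A @ x # y # B) = vcoef h (A @ y # x # B) + comm (\<lambda>m. vcoef h (A @ m # B)) x y"
proof -
  have n1: "NR (A @ x # y # B)" "NR (A @ y # x # B)" using assms by (auto simp: NR_def)
  show ?thesis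
  proof (cases "fst x = snd x \<and> fst y = snd y")
    case True
    hence "comm (\<lambda>m. vcoef h (A @ m # B)) x y = 0"
      by (auto simp: comm_def)
    moreover have "vcoef h (A @ x # y # B) = vcoef h (A @ y # x # B)"
      using PhiN[OF n1(1)] PhiN[OF n1(2)] by (auto simp: ac_simps)
    ultimately show ?thesis by simp
  next
    case False
    hence "vcoef h (A @ x # y # B) = 0" "vcoef h (A @ y # x # B) = 0"
      using PhiN[OF n1(1), of h] PhiN[OF n1(2), of h] by auto
    moreover have "comm (\<lambda>m. vcoef h (A @ m # B)) x y = 0"
      using False assms
      by (auto simp: comm_def raising_def intro!: Phi_zero_lower)
    ultimately show ?thesis by simp
  qed
qed

lemma PhiC_aux:
  "\<forall>A x y B. w = A @ x # y # B \<longrightarrow>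
     vcoef h (A @ x # y # B) = vcoef h (A @ y # x # B) + comm (\<lambda>m. vcoef h (A @ m # B)) x y"
proof (induction w rule: wf_induct[OF wf_measures[of "[length, Mpot]"]])
  case (1 w)
  have IHs: "vcoef h (A' @ x' # y' # B') = vcoef h (A' @ y' # x' # B') + comm (\<lambda>m. vcoef h (A' @ m # B')) x' y'"
    if "length (A' @ x' # y' # B') < length w" for A' x' y' B'
    by (rule 1[rule_format]) (use that in \<open>auto simp: measures_def\<close>)
  have IHm: "vcoef h (A' @ x' # y' # B') = vcoef h (A' @ y' # x' # B') + comm (\<lambda>m. vcoef h (A' @ m # B')) x' y'"
    if "length (A' @ x' # y' # B') = length w" "Mpot (A' @ x' # y' # B') < Mpot w" for A' x' y' B'
    by (rule 1[rule_format]) (use that in \<open>auto simp: measures_def\<close>)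
  show ?case
  proof (intro allI impI)
    fix A x y B assume w: "w = A @ x # y # B"

    let ?F = "vcoef h"
    show "?F (A @ x # y # B) = ?F (A @ y # x # B) + comm (\<lambda>m. ?F (A @ m # B)) x y"
    proof (cases "NR B")
      case False
      then obtain B0 r t where B: "B = B0 @ r # t" and r: "raising r" and t: "NR t"
        using last_raising_split by blast
      show ?thesis
      proof (cases t)
        case Nil
        have z: "?F (Q @ B0 @ [r]) = 0" for Q using PhiZ[OF r, of h "Q @ B0"] by simp
        have "comm (\<lambda>m. ?F (A @ m # B)) x y = comm (\<lambda>m. 0) x y"
          using z[of "A @ [_]"] by (simp add: B Nil comm_def)
        also have "\<dots> = 0" by (simp add: comm_def)
        finally show ?thesis using z[of "A @ [x, y]"] z[of "A @ [y, x]"] by (simp add: B Nil)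
      next
        case (Cons b t')
        have b: "\<not> raising b" "NR t'" using t Cons by (auto simp: NR_def)
        have red: "?F (Q @ B0 @ r # b # t') = ?F (Q @ B0 @ b # r # t') + comm (\<lambda>m. ?F (Q @ B0 @ m # t')) r b" for Q
          using PhiD[OF r b(1) b(2), of h "Q @ B0"] by simp
        have i1: "?F (A @ x # y # B0 @ b # r # t') = ?F (A @ y # x # B0 @ b # r # t') + comm (\<lambda>m. ?F (A @ m # B0 @ b # r # t')) x y"
          by (rule IHm) (use Mpot_swap1[OF r b(1), of "A @ x # y # B0" t'] in \<open>simp_all add: w B Cons\<close>)
        have i2: "?F (A @ x # y # B0 @ m' # t') = ?F (A @ y # x # B0 @ m' # t') + comm (\<lambda>m. ?F (A @ m # B0 @ m' # t')) x y" for m'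
          by (rule IHs) (simp add: w B Cons)
        have "?F (A @ x # y # B) = ?F (A @ x # y # B0 @ b # r # t') + comm (\<lambda>m'. ?F (A @ x # y # B0 @ m' # t')) r b"
          using red[of "A @ [x, y]"] by (simp add: B Cons)
        also have "\<dots> = ?F (A @ y # x # B0 @ b # r # t') + comm (\<lambda>m. ?F (A @ m # B0 @ b # r # t')) x y
             + comm (\<lambda>m'. ?F (A @ y # x # B0 @ m' # t')) r b + comm (\<lambda>m'. comm (\<lambda>m. ?F (A @ m # B0 @ m' # t')) x y) r b"
          unfolding i1 i2 comm_add by simp
        also have "\<dots> = ?F (A @ y # x # B) + comm (\<lambda>m. ?F (A @ m # B)) x y"
          using red[of "A @ [y, x]"] red[of "A @ [_]"]
          by (simp add: B Cons comm_add comm_swap[of _ r b x y])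
        finally show ?thesis .
      qed
    next
      case NRB: True
      show ?thesis
      proof (cases "raising x")
        case xr: True
        show ?thesis
        proof (cases "raising y")
          case yr: False
          show ?thesis using PhiD[OF xr yr NRB] .
        next
          case yr: True
          show ?thesis
          proof (cases B)
            case Nil
            have "comm (\<lambda>m. ?F (A @ m # B)) x y = 0"
              by (rule comm_zero_r[OF xr yr]) (simp add: Nil PhiZ)
            thus ?thesis using PhiZ[OF yr, of h "A @ [x]"] PhiZ[OF xr, of h "A @ [y]"] by (simp add: Nil)
          next
            case (Cons b B')
            have b: "\<not> raising b" "NR B'" using NRB Cons by (auto simp: NR_def)
            let ?G = "\<lambda>m'. ?F (A @ m' # B')"
            have e1: "?F (A @ x # y # b # B') = ?F (A @ x # b # y # B') + comm (\<lambda>m. ?F (A @ x # m # B')) y b"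
              using PhiD[OF yr b, of h "A @ [x]"] by simp
            have e2: "?F (A @ x # b # y # B') = ?F (A @ b # x # y # B') + comm (\<lambda>m. ?F (A @ m # y # B')) x b"
              by (rule IHm) (use xr yr b in \<open>simp_all add: w Cons Mpot_append\<close>)
            have e3: "?F (A @ b # x # y # B') = ?F (A @ b # y # x # B') + comm (\<lambda>m. ?F (A @ b # m # B')) x y"
              using IHm[of "A @ [b]" x y B'] xr yr b by (simp add: w Cons Mpot_append)
            have e4: "?F (A @ y # x # b # B') = ?F (A @ y # b # x # B') + comm (\<lambda>m. ?F (A @ y # m # B')) x b"
              using PhiD[OF xr b, of h "A @ [y]"] by simp
            have e5: "?F (A @ y # b # x # B') = ?F (A @ b # y # x # B') + comm (\<lambda>m. ?F (A @ m # x # B')) y b"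
              by (rule IHm) (use xr yr b in \<open>simp_all add: w Cons Mpot_append\<close>)
            have e6: "?F (A @ m # b # B') = ?F (A @ b # m # B') + comm ?G m b" for m
              by (rule IHs) (simp add: w Cons)
            have e7: "?F (A @ m # y # B') = ?F (A @ y # m # B') + comm ?G m y" for m
              by (rule IHs) (simp add: w Cons)
            have e8: "?F (A @ x # m # B') = ?F (A @ m # x # B') + comm ?G x m" for m
              by (rule IHs) (simp add: w Cons)
            have j: "comm (\<lambda>m. comm ?G m y) x b + comm (\<lambda>m. comm ?G x m) y b = comm (\<lambda>m. comm ?G m b) x y"
              by (rule jacobi1)
            show ?thesis
              unfolding Cons e1 e2 e3 e4 e5 e6 e7 e8 comm_add using j by simp
          qed
        qed
      next
        case xr: False
        show ?thesis
        proof (cases "raising y")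
          case yr: True
          show ?thesis using PhiD[OF yr xr NRB, of h A] comm_anti[of _ y x] by simp
        next
          case yr: False
          show ?thesis
          proof (cases "NR A")
            case True
            show ?thesis by (rule psi_swap[OF True NRB xr yr])
          next
            case False
            then obtain A1 z A2 where A: "A = A1 @ z # A2" and z: "raising z" and A2: "NR A2"
              using last_raising_split by blast
            show ?thesis
            proof (cases A2)
              case (Cons a A2')
              have a: "\<not> raising a" "NR A2'" using A2 Cons by (auto simp: NR_def)
              have red: "?F (A1 @ z # a # A2' @ S) = ?F (A1 @ a # z # A2' @ S) + comm (\<lambda>m. ?F (A1 @ m # A2' @ S)) z a"
                if "NR S" for S
                using PhiD[OF z a(1), of "A2' @ S" h A1] a(2) that by (auto simp: NR_def)
              have i1: "?F (A1 @ a # z # A2' @ x # y # B) = ?F (A1 @ a # z # A2' @ y # x # B) + comm (\<lambda>m. ?F (A1 @ a # z # A2' @ m # B)) x y"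
                using IHm[of "A1 @ a # z # A2'" x y B] Mpot_swap1[OF z a(1), of A1 "A2' @ x # y # B"]
                by (simp add: w A Cons)
              have i2: "?F (A1 @ m' # A2' @ x # y # B) = ?F (A1 @ m' # A2' @ y # x # B) + comm (\<lambda>m. ?F (A1 @ m' # A2' @ m # B)) x y" for m'
                using IHs[of "A1 @ m' # A2'" x y B] by (simp add: w A Cons)
              have nS: "NR (x # y # B)" "NR (y # x # B)" using xr yr NRB by (auto simp: NR_def)
              have cc: "comm (\<lambda>m. ?F (A @ m # B)) x y = comm (\<lambda>m. ?F (A1 @ a # z # A2' @ m # B) + comm (\<lambda>m'. ?F (A1 @ m' # A2' @ m # B)) z a) x y"
                by (rule comm_cong_nr[OF xr yr]) (use red NRB in \<open>auto simp: A Cons NR_def\<close>)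
              show ?thesis
                unfolding cc using red[OF nS(1)] red[OF nS(2)]
                by (simp add: A Cons i1 i2 comm_add comm_swap[of _ z a x y])
            next
              case Nil
              let ?G = "\<lambda>m'. ?F (A1 @ m' # B)"
              have yB: "NR (y # B)" "NR (x # B)" using xr yr NRB by (auto simp: NR_def)
              have f1: "?F (A1 @ z # x # y # B) = ?F (A1 @ x # z # y # B) + comm (\<lambda>m. ?F (A1 @ m # y # B)) z x"
                using PhiD[OF z xr yB(1), of h A1] .
              have f2: "?F (A1 @ x # z # y # B) = ?F (A1 @ x # y # z # B) + comm (\<lambda>m. ?F (A1 @ x # m # B)) z y"
                using PhiD[OF z yr NRB, of h "A1 @ [x]"] by simp
              have f3: "?F (A1 @ x # y # z # B) = ?F (A1 @ y # x # z # B) + comm (\<lambda>m. ?F (A1 @ m # z # B)) x y"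
                by (rule IHm) (use z xr yr in \<open>simp_all add: w A Nil Mpot_append\<close>)
              have f4: "?F (A1 @ z # y # x # B) = ?F (A1 @ y # z # x # B) + comm (\<lambda>m. ?F (A1 @ m # x # B)) z y"
                using PhiD[OF z yr yB(2), of h A1] .
              have f5: "?F (A1 @ y # z # x # B) = ?F (A1 @ y # x # z # B) + comm (\<lambda>m. ?F (A1 @ y # m # B)) z x"
                using PhiD[OF z xr NRB, of h "A1 @ [y]"] by simp
              have f6: "comm (\<lambda>m. ?F (A1 @ z # m # B)) x y = comm (\<lambda>m. ?F (A1 @ m # z # B) + comm ?G z m) x y"
                by (rule comm_cong_nr[OF xr yr]) (use PhiD[OF z _ NRB, of _ h A1] in auto)
              have f7: "?F (A1 @ m # y # B) = ?F (A1 @ y # m # B) + comm ?G m y" for m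
                by (rule IHs) (simp add: w A Nil)
              have f8: "?F (A1 @ x # m # B) = ?F (A1 @ m # x # B) + comm ?G x m" for m
                by (rule IHs) (simp add: w A Nil)
              have j: "comm (\<lambda>m. comm ?G m y) z x + comm (\<lambda>m. comm ?G x m) z y = comm (\<lambda>m. comm ?G z m) x y"
                by (rule jacobi2)
              have AA: "A = A1 @ [z]" using A Nil by simp
              show ?thesis
                unfolding AA append_assoc append_Cons append_Nil f1 f2 f3 f4 f5 f6 f7 f8 comm_add
                using j by (simp add: algebra_simps)
            qed
          qed
        qed
      qed
    qed
  qed
qed

lemma PhiC: "vcoef h (A @ x # y # B) = vcoef h (A @ y # x # B) + comm (\<lambda>m. vcoef h (A @ m # B)) x y"
  using PhiC_aux by blast

lemma comm_scale: "comm (\<lambda>m. c * f m) x y = c * comm f x y"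
  by (simp add: comm_def algebra_simps)

lemma comm_zero: "comm (\<lambda>m. 0) x y = 0"
  by (simp add: comm_def)

lemma PhiL_aux:
  "snd x < fst x \<Longrightarrow> vcoef h (x # w) = 0"
proof (induction w rule: wf_induct[OF wf_measures[of "[length, Mpot]"]])
  case (1 w)
  have IH: "vcoef h (x # w') = 0" if "(w', w) \<in> measures [length, Mpot]" for w'
    using 1 that by blast
  show ?case
  proof (cases "NR w")
    case True
    hence "NR (x # w)" using 1(2) by (simp add: NR_def raising_def)
    thus ?thesis using PhiN 1(2) by fastforce
  next
    case False
    then obtain P r t where w: "w = P @ r # t" and r: "raising r" and t: "NR t"
      using last_raising_split by blast
    show ?thesis
    proof (cases t)
      case Nil
      thus ?thesis using PhiZ[OF r, of h "x # P"] w by simp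
    next
      case (Cons b t')
      have b: "\<not> raising b" "NR t'" using t Cons by (auto simp: NR_def)
      have "vcoef h (x # w) = vcoef h ((x # P) @ b # r # t') + comm (\<lambda>m. vcoef h ((x # P) @ m # t')) r b"
        using PhiD[OF r b, of h "x # P"] w Cons by simp
      also have "vcoef h ((x # P) @ b # r # t') = 0"
        using IH[of "P @ b # r # t'"] Mpot_swap1[OF r b(1), of P t'] by (simp add: w Cons measures_def)
      also have "(\<lambda>m. vcoef h ((x # P) @ m # t')) = (\<lambda>m. 0)"
        using IH by (auto simp: w Cons measures_def)
      finally show ?thesis by (simp add: comm_zero)
    qed
  qed
qed

lemma PhiL: "snd x < fst x \<Longrightarrow> vcoef h (x # w) = 0"
  using PhiL_aux by blast

lemma PhiE_aux:
  "vcoef h (w @ [(a, a)]) = h a * vcoef h w"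
proof (induction w rule: wf_induct[OF wf_measures[of "[length, Mpot]"]])
  case (1 w)
  have IH: "vcoef h (w' @ [(a, a)]) = h a * vcoef h w'" if "(w', w) \<in> measures [length, Mpot]" for w'
    using 1 that by blast
  show ?case
  proof (cases "NR w")
    case True
    hence "NR (w @ [(a, a)])" by (simp add: NR_def raising_def)
    thus ?thesis using PhiN[OF True, of h] PhiN[of "w @ [(a,a)]" h] by (auto simp: ac_simps)
  next
    case False
    then obtain P r t where w: "w = P @ r # t" and r: "raising r" and t: "NR t"
      using last_raising_split by blast
    have aa: "\<not> raising (a, a)" by (simp add: raising_def)
    show ?thesis
    proof (cases t)
      case Nil
      have "vcoef h (w @ [(a, a)]) = vcoef h (P @ [(a, a), r]) + comm (\<lambda>m. vcoef h (P @ [m])) r (a, a)"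
        using PhiD[OF r aa, of "[]" h P] w Nil by (simp add: NR_def)
      also have "comm (\<lambda>m. vcoef h (P @ [m])) r (a, a) = 0"
        using r by (auto simp: comm_def PhiZ raising_def)
      finally show ?thesis using PhiZ[OF r, of h P] PhiZ[OF r, of h "P @ [(a,a)]"] w Nil by simp
    next
      case (Cons b t')
      have b: "\<not> raising b" "NR t'" using t Cons by (auto simp: NR_def)
      have b2: "NR (t' @ [(a, a)])" using b(2) aa by (simp add: NR_def)
      have "vcoef h (w @ [(a, a)]) = vcoef h (P @ b # r # t' @ [(a,a)]) + comm (\<lambda>m. vcoef h (P @ m # t' @ [(a,a)])) r b"
        using PhiD[OF r b(1) b2, of h P] w Cons by simp
      also have "vcoef h (P @ b # r # t' @ [(a,a)]) = h a * vcoef h (P @ b # r # t')"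
        using IH[of "P @ b # r # t'"] Mpot_swap1[OF r b(1), of P t'] by (simp add: w Cons measures_def)
      also have "(\<lambda>m. vcoef h (P @ m # t' @ [(a,a)])) = (\<lambda>m. h a * vcoef h (P @ m # t'))"
      proof
        fix m show "vcoef h (P @ m # t' @ [(a,a)]) = h a * vcoef h (P @ m # t')"
          using IH[of "P @ m # t'"] by (simp add: w Cons measures_def)
      qed
      also have "h a * vcoef h (P @ b # r # t') + comm (\<lambda>m. h a * vcoef h (P @ m # t')) r b
          = h a * vcoef h w"
        using PhiD[OF r b, of h P] w Cons by (simp add: comm_scale algebra_simps)
      finally show ?thesis .
    qed
  qed
qed

lemma PhiE: "vcoef h (w @ [(a, a)]) = h a * vcoef h w"
  using PhiE_aux by blast

definition Xlift :: "nat \<Rightarrow> ((nat \<times> nat) list \<Rightarrow> complex) \<Rightarrow> (nat \<times> nat) list \<Rightarrow> complex" where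
  "Xlift n F xs = sum_list (map (\<lambda>c. prod_list (map snd c) * F (map fst c)) (product_lists (map (Xexp n) xs)))"

definition Xs :: "nat \<Rightarrow> ((nat \<times> nat) \<Rightarrow> complex) \<Rightarrow> nat \<times> nat \<Rightarrow> complex" where
  "Xs n G m = sum_list (map (\<lambda>(e, c). c * G e) (Xexp n m))"

lemma vcoefX_Xlift: "vcoefX n h xs = Xlift n (vcoef h) xs"
  by (simp add: vcoefX_def Xlift_def)

lemma Xlift_Nil[simp]: "Xlift n F [] = F []"
  by (simp add: Xlift_def)

lemma sum_list_map_mult_left: "sum_list (map (\<lambda>x. c * f x) L) = (c::complex) * sum_list (map f L)"
  by (induction L) (auto simp: algebra_simps)

lemma sum_list_map_concat: "sum_list (map f (concat L)) = sum_list (map (\<lambda>l. sum_list (map f l)) L)"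
  by (induction L) auto

lemma Xlift_Cons: "Xlift n F (x # xs) = Xs n (\<lambda>e. Xlift n (\<lambda>w. F (e # w)) xs) x"
proof -
  have "sum_list (map (\<lambda>c. prod_list (map snd c) * F (map fst c)) (concat (map (\<lambda>x. map ((#) x) P) L)))
      = sum_list (map (\<lambda>(e, c). c * sum_list (map (\<lambda>c. prod_list (map snd c) * F (e # map fst c)) P)) L)" for P L
    by (induction L) (auto simp: comp_def sum_list_map_mult_left mult.assoc)
  thus ?thesis unfolding Xlift_def Xs_def by simp
qed

lemma Xlift_add: "Xlift n (\<lambda>w. F w + G w) xs = Xlift n F xs + Xlift n G xs"
  unfolding Xlift_def by (simp add: distrib_left sum_list_addf)

lemma Xlift_diff: "Xlift n (\<lambda>w. F w - G w) xs = Xlift n F xs - Xlift n G xs"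
  unfolding Xlift_def by (simp add: right_diff_distrib sum_list_subtractf)

lemma Xlift_scale: "Xlift n (\<lambda>w. c * F w) xs = c * Xlift n F xs"
  unfolding Xlift_def by (simp add: sum_list_map_mult_left algebra_simps)

lemma Xlift_zero: "Xlift n (\<lambda>w. 0) xs = 0"
  using Xlift_scale[of n 0 "\<lambda>w. 0" xs] by simp

lemma Xlift_cong: "(\<And>w. F w = G w) \<Longrightarrow> Xlift n F xs = Xlift n G xs"
  by (simp add: Xlift_def)

lemma Xs_cong: "(\<And>e. F e = G e) \<Longrightarrow> Xs n F m = Xs n G m"
  by (simp add: Xs_def)

lemma Xs_add: "Xs n (\<lambda>e. F e + G e) m = Xs n F m + Xs n G m"
proof -
  have "sum_list (map (\<lambda>(e, c). c * (F e + G e)) L) = sum_list (map (\<lambda>(e, c). c * F e) L) + sum_list (map (\<lambda>(e, c). c * G e) L)" for L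
    by (induction L) (auto simp: algebra_simps)
  thus ?thesis unfolding Xs_def by simp
qed

lemma Xlift_Xs: "Xlift n (\<lambda>w. Xs n (\<lambda>e. G e w) m) xs = Xs n (\<lambda>e. Xlift n (G e) xs) m"
proof -
  have "Xlift n (\<lambda>w. sum_list (map (\<lambda>(e, c). c * G e w) L)) xs = sum_list (map (\<lambda>(e, c). c * Xlift n (G e) xs) L)" for L
    by (induction L) (auto simp: Xlift_add Xlift_scale Xlift_zero)
  thus ?thesis unfolding Xs_def by simp
qed

lemma Xlift_append: "Xlift n F (A @ B) = Xlift n (\<lambda>u. Xlift n (\<lambda>v. F (u @ v)) B) A"
proof (induction A arbitrary: F)
  case Nil thus ?case by simp
next
  case (Cons a A)
  show ?case by (simp add: Xlift_Cons Cons)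
qed

lemma Xlift_comm: "Xlift n (\<lambda>v. comm (\<lambda>m. G m v) x y) xs = comm (\<lambda>m. Xlift n (G m) xs) x y"
  unfolding comm_def by (simp add: Xlift_diff Xlift_zero)

lemma sum_list_zero_map: "sum_list (map (\<lambda>b. (0::complex)) L) = 0"
  by (induction L) auto

lemma sum_list_swap: "sum_list (map (\<lambda>a. sum_list (map (\<lambda>b. f a b) L2)) L1) = sum_list (map (\<lambda>b. sum_list (map (\<lambda>a. (f a b :: complex)) L1)) L2)"
  by (induction L1) (simp_all add: sum_list_addf sum_list_zero_map)

lemma Xs_swap: "Xs n (\<lambda>a. Xs n (\<lambda>b. H a b) y) x = Xs n (\<lambda>b. Xs n (\<lambda>a. H a b) x) y"
proof -
  have e: "Xs n (\<lambda>a. Xs n (\<lambda>b. H a b) y) x = sum_list (map (\<lambda>p. sum_list (map (\<lambda>q. snd p * snd q * H (fst p) (fst q)) (Xexp n y))) (Xexp n x))" for H x y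
    unfolding Xs_def case_prod_beta sum_list_map_mult_left[symmetric] by (simp add: mult.assoc)
  show ?thesis unfolding e by (subst sum_list_swap) (simp add: ac_simps)
qed

lemma Xs_nondiag: "fst m \<noteq> snd m \<Longrightarrow> Xs n G m = G m"
  by (simp add: Xs_def Xexp_def)

lemma sl_upt: "sum_list (map f [1..<n+1]) = (\<Sum>l\<in>{1..n}. (f l :: complex))"
proof -
  have "{1..n} = set [1..<n+1]" by auto
  thus ?thesis by (simp only: sum_set_upt_conv_sum_list_nat)
qed

lemma Xs_diag: "Xs n G (a, a) = G (a, a) - (\<Sum>l\<in>{1..n}. G (l, l)) / of_nat n"
proof -
  have "sum_list (map (\<lambda>l. - 1 / of_nat n * G (l, l)) [1..<n+1]) = (\<Sum>l\<in>{1..n}. - 1 / of_nat n * G (l, l))"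
    by (rule sl_upt)
  also have "\<dots> = - (\<Sum>l\<in>{1..n}. G (l, l)) / of_nat n"
    by (simp add: sum_negf sum_divide_distrib)
  finally show ?thesis by (simp add: Xs_def Xexp_def comp_def)
qed

lemma sum_comm_diag_l:
  assumes "fst y \<in> {1..n}" "snd y \<in> {1..n}"
  shows "(\<Sum>l\<in>{1..n}. comm G (l, l) y) = 0"
proof -
  have "(\<Sum>l\<in>{1..n}. comm G (l, l) y) = (\<Sum>l\<in>{1..n}. (if l = fst y then G (l, snd y) else 0)) - (\<Sum>l\<in>{1..n}. (if snd y = l then G (fst y, l) else 0))"
    by (simp add: comm_def sum_subtractf)
  also have "\<dots> = 0" using assms by (simp add: sum.delta sum.delta')
  finally show ?thesis .
qed

lemma sum_comm_diag_r:
  assumes "fst y \<in> {1..n}" "snd y \<in> {1..n}"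
  shows "(\<Sum>l\<in>{1..n}. comm G y (l, l)) = 0"
proof -
  have "comm G y (l, l) = - comm G (l, l) y" for l by (simp add: comm_def)
  thus ?thesis using sum_comm_diag_l[OF assms, of G] by (simp add: sum_negf)
qed

lemma comm_diag_diag: "comm G (a, a) (c, c) = 0"
  by (simp add: comm_def)

lemma Xbracket:
  assumes "fst x \<in> {1..n}" "snd x \<in> {1..n}" "fst y \<in> {1..n}" "snd y \<in> {1..n}"
  shows "Xs n (\<lambda>ex. Xs n (\<lambda>ey. comm G ex ey) y) x = comm (Xs n G) x y"
proof -
  obtain a b where x: "x = (a, b)" by force
  obtain c d where y: "y = (c, d)" by force
  show ?thesis
  proof (cases "a = b")
    case ab: True
    show ?thesis
    proof (cases "c = d")
      case True
      thus ?thesis using ab x y by (simp add: Xs_diag comm_diag_diag)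
    next
      case False
      have "Xs n (\<lambda>ex. Xs n (\<lambda>ey. comm G ex ey) y) x = comm G x y"
        using ab False x y assms sum_comm_diag_l[of y n G] by (simp add: Xs_diag Xs_nondiag)
      also have "\<dots> = comm (Xs n G) x y"
        using ab False x y by (auto simp: comm_def Xs_nondiag)
      finally show ?thesis .
    qed
  next
    case ab: False
    show ?thesis
    proof (cases "c = d")
      case True
      have "Xs n (\<lambda>ex. Xs n (\<lambda>ey. comm G ex ey) y) x = comm G x y"
        using ab True x y assms sum_comm_diag_r[of x n G] by (simp add: Xs_diag Xs_nondiag)
      also have "\<dots> = comm (Xs n G) x y"
        using ab True x y by (auto simp: comm_def Xs_nondiag)
      finally show ?thesis .
    next
      case False
      have "Xs n (\<lambda>ex. Xs n (\<lambda>ey. comm G ex ey) y) x = comm G x y"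
        using ab False x y by (simp add: Xs_nondiag)
      also have "\<dots> = comm (Xs n G) x y"
        using ab False x y by (auto simp: comm_def Xs_nondiag Xs_diag)
      finally show ?thesis .
    qed
  qed
qed

definition PX :: "nat \<Rightarrow> (nat \<Rightarrow> complex) \<Rightarrow> (nat \<times> nat) list \<Rightarrow> complex" where
  "PX n h w = Xlift n (vcoef h) w"

lemma PX_C:
  assumes "fst x \<in> {1..n}" "snd x \<in> {1..n}" "fst y \<in> {1..n}" "snd y \<in> {1..n}"
  shows "PX n h (A @ x # y # B) = PX n h (A @ y # x # B) + comm (\<lambda>m. PX n h (A @ m # B)) x y"
proof -
  have inner: "Xlift n (\<lambda>v. vcoef h (u @ v)) (x # y # B)
      = Xlift n (\<lambda>v. vcoef h (u @ v)) (y # x # B) + comm (\<lambda>m. Xlift n (\<lambda>v. vcoef h (u @ v)) (m # B)) x y" for u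
  proof -
    have pw: "Xlift n (\<lambda>v. vcoef h (u @ ex # ey # v)) B = Xlift n (\<lambda>v. vcoef h (u @ ey # ex # v)) B
        + Xlift n (\<lambda>v. comm (\<lambda>m. vcoef h (u @ m # v)) ex ey) B" for ex ey
      unfolding Xlift_add[symmetric] by (rule Xlift_cong) (rule PhiC)
    have "Xlift n (\<lambda>v. vcoef h (u @ v)) (x # y # B)
        = Xs n (\<lambda>ex. Xs n (\<lambda>ey. Xlift n (\<lambda>v. vcoef h (u @ ex # ey # v)) B) y) x"
      by (simp add: Xlift_Cons)
    also have "\<dots> = Xs n (\<lambda>ex. Xs n (\<lambda>ey. Xlift n (\<lambda>v. vcoef h (u @ ey # ex # v)) B
             + Xlift n (\<lambda>v. comm (\<lambda>m. vcoef h (u @ m # v)) ex ey) B) y) x"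
      by (intro Xs_cong) (rule pw)
    also have "\<dots> = Xs n (\<lambda>ex. Xs n (\<lambda>ey. Xlift n (\<lambda>v. vcoef h (u @ ey # ex # v)) B) y) x
         + Xs n (\<lambda>ex. Xs n (\<lambda>ey. comm (\<lambda>m. Xlift n (\<lambda>v. vcoef h (u @ m # v)) B) ex ey) y) x"
      by (simp add: Xs_add Xlift_comm)
    also have "Xs n (\<lambda>ex. Xs n (\<lambda>ey. Xlift n (\<lambda>v. vcoef h (u @ ey # ex # v)) B) y) x
        = Xlift n (\<lambda>v. vcoef h (u @ v)) (y # x # B)"
      by (simp add: Xlift_Cons Xs_swap[of n _ y x])
    also have "Xs n (\<lambda>ex. Xs n (\<lambda>ey. comm (\<lambda>m. Xlift n (\<lambda>v. vcoef h (u @ m # v)) B) ex ey) y) x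
        = comm (\<lambda>m. Xlift n (\<lambda>v. vcoef h (u @ v)) (m # B)) x y"
      by (simp add: Xbracket[OF assms] Xlift_Cons)
    finally show ?thesis .
  qed
  show ?thesis
    unfolding PX_def Xlift_append[of n _ A] inner Xlift_add Xlift_comm by simp
qed

lemma PX_L: "snd x < fst x \<Longrightarrow> PX n h (x # w) = 0"
  unfolding PX_def by (simp add: Xlift_Cons Xs_nondiag PhiL Xlift_zero)

lemma PX_Z: "raising r \<Longrightarrow> PX n h (Q @ [r]) = 0"
  unfolding PX_def Xlift_append
  by (simp add: Xlift_Cons Xs_nondiag PhiZ Xlift_zero raising_def)

lemma PX_D: "PX n h (w @ [(a, a)]) = (h a - (\<Sum>l\<in>{1..n}. h l) / of_nat n) * PX n h w"
proof -
  have "Xlift n (\<lambda>v. vcoef h (u @ v)) [(a, a)] = (h a - (\<Sum>l\<in>{1..n}. h l) / of_nat n) * vcoef h u" for u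
    by (simp add: Xlift_Cons Xs_diag PhiE sum_distrib_right[symmetric] algebra_simps)
  thus ?thesis unfolding PX_def Xlift_append by (simp add: Xlift_scale)
qed

lemma PX_Nil: "PX n h [] = 1"
  by (simp add: PX_def Phi_nil)

fun PS :: "nat \<Rightarrow> ((nat \<times> nat) list \<Rightarrow> complex) \<Rightarrow> nat \<Rightarrow> nat \<Rightarrow> nat \<Rightarrow> complex" where
  "PS n F 0 i j = F [(i, j)]"
| "PS n F (Suc m) i j = (\<Sum>l\<in>{1..n}. PS n (\<lambda>w. F ((i, l) # w)) m l j)"

lemma PS_add: "PS n (\<lambda>w. F w + G w) m i j = PS n F m i j + PS n G m i j"
  by (induction m arbitrary: F G i) (simp_all add: sum.distrib)

lemma PS_diff: "PS n (\<lambda>w. F w - G w) m i j = PS n F m i j - PS n G m i j"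
  by (induction m arbitrary: F G i) (simp_all add: sum_subtractf)

lemma PS_scale: "PS n (\<lambda>w. c * F w) m i j = c * PS n F m i j"
  by (induction m arbitrary: F i) (simp_all add: sum_distrib_left)

lemma PS_zero: "PS n (\<lambda>w. 0) m i j = 0"
  using PS_scale[of n 0 "\<lambda>w. 0" m i j] by simp

lemma PS_cong: "(\<And>w. F w = G w) \<Longrightarrow> PS n F m i j = PS n G m i j"
proof -
  assume "\<And>w. F w = G w"
  hence "F = G" by blast
  thus ?thesis by simp
qed

lemma PS_if: "PS n (\<lambda>w. if c then F w else 0) m i j = (if c then PS n F m i j else 0)"
  by (cases c) (simp_all add: PS_zero)

lemma sum_if_const: "(\<Sum>l\<in>S. if c then f l else 0) = (if c then (\<Sum>l\<in>S. f l) else (0::complex))"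
  by (cases c) simp_all

lemma Leib:
  assumes ab: "a \<in> {1..n}" "b \<in> {1..n}" and j: "j \<in> {1..n}"
  shows "i \<in> {1..n} \<Longrightarrow> PS n (\<lambda>w. PX n h (A @ (a, b) # w @ B)) m i j
       = PS n (\<lambda>w. PX n h (A @ w @ (a, b) # B)) m i j
         + (if b = i then PS n (\<lambda>w. PX n h (A @ w @ B)) m a j else 0)
         - (if j = a then PS n (\<lambda>w. PX n h (A @ w @ B)) m i b else 0)"
proof (induction m arbitrary: A i)
  case 0
  show ?case using PX_C[of "(a, b)" n "(i, j)" h A B] ab j 0 by (simp add: comm_def)
next
  case (Suc m)
  let ?P = "PX n h"
  have step: "PS n (\<lambda>w. ?P (A @ (a,b) # (i,l) # w @ B)) m l j
      = PS n (\<lambda>w. ?P (A @ (i,l) # w @ (a,b) # B)) m l j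
        + (if b = l then PS n (\<lambda>w. ?P (A @ (i,l) # w @ B)) m a j else 0)
        - (if j = a then PS n (\<lambda>w. ?P (A @ (i,l) # w @ B)) m l b else 0)
        + ((if b = i then PS n (\<lambda>w. ?P (A @ (a,l) # w @ B)) m l j else 0)
        - (if l = a then PS n (\<lambda>w. ?P (A @ (i,b) # w @ B)) m l j else 0))"
    if l: "l \<in> {1..n}" for l
  proof -
    have pw: "?P (A @ (a,b) # (i,l) # w @ B) = ?P (A @ (i,l) # (a,b) # w @ B)
        + ((if b = i then ?P (A @ (a,l) # w @ B) else 0) - (if l = a then ?P (A @ (i,b) # w @ B) else 0))" for w
      using PX_C[of "(a,b)" n "(i,l)" h A "w @ B"] ab Suc.prems l by (simp add: comm_def)
    have "PS n (\<lambda>w. ?P (A @ (a,b) # (i,l) # w @ B)) m l j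
        = PS n (\<lambda>w. ?P (A @ (i,l) # (a,b) # w @ B)) m l j
          + PS n (\<lambda>w. (if b = i then ?P (A @ (a,l) # w @ B) else 0) - (if l = a then ?P (A @ (i,b) # w @ B) else 0)) m l j"
      unfolding pw PS_add ..
    also have "PS n (\<lambda>w. ?P (A @ (i,l) # (a,b) # w @ B)) m l j
        = PS n (\<lambda>w. ?P (A @ (i,l) # w @ (a,b) # B)) m l j
        + (if b = l then PS n (\<lambda>w. ?P (A @ (i,l) # w @ B)) m a j else 0)
        - (if j = a then PS n (\<lambda>w. ?P (A @ (i,l) # w @ B)) m l b else 0)"
      using Suc.IH[of l "A @ [(i, l)]"] l by simp
    finally show ?thesis by (simp add: PS_diff PS_if)
  qed
  have "PS n (\<lambda>w. ?P (A @ (a, b) # w @ B)) (Suc m) i j = (\<Sum>l\<in>{1..n}. PS n (\<lambda>w. ?P (A @ (a,b) # (i,l) # w @ B)) m l j)"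
    by simp
  also have "\<dots> = (\<Sum>l\<in>{1..n}. PS n (\<lambda>w. ?P (A @ (i,l) # w @ (a,b) # B)) m l j
        + (if b = l then PS n (\<lambda>w. ?P (A @ (i,l) # w @ B)) m a j else 0)
        - (if j = a then PS n (\<lambda>w. ?P (A @ (i,l) # w @ B)) m l b else 0)
        + ((if b = i then PS n (\<lambda>w. ?P (A @ (a,l) # w @ B)) m l j else 0)
        - (if l = a then PS n (\<lambda>w. ?P (A @ (i,b) # w @ B)) m l j else 0)))"
    by (rule sum.cong) (simp_all add: step)
  also have "\<dots> = PS n (\<lambda>w. ?P (A @ w @ (a, b) # B)) (Suc m) i j
         + (if b = i then PS n (\<lambda>w. ?P (A @ w @ B)) (Suc m) a j else 0)
         - (if j = a then PS n (\<lambda>w. ?P (A @ w @ B)) (Suc m) i b else 0)"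
    using ab by (simp add: sum.distrib sum_subtractf sum_if_const)
  finally show ?case .
qed

definition gw :: "nat \<Rightarrow> (nat \<Rightarrow> complex) \<Rightarrow> nat \<Rightarrow> complex" where
  "gw n h i = h i - (\<Sum>l\<in>{1..n}. h l) / of_nat n"

lemma PS_diag_step:
  assumes i: "i \<in> {1..n}"
  shows "PS n (PX n h) (Suc m) i i = (gw n h i + of_nat (n - i)) * PS n (PX n h) m i i
           - (\<Sum>l\<in>{i<..n}. PS n (PX n h) m l l)"
proof -
  let ?P = "PX n h"
  let ?c = "\<lambda>l. PS n ?P m l l"
  have low: "PS n (\<lambda>w. ?P ((i, l) # w)) m l i = 0" if "l < i" for l
  proof -
    have "PS n (\<lambda>w. ?P ((i, l) # w)) m l i = PS n (\<lambda>w. 0) m l i"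
      by (rule PS_cong) (use that PX_L in auto)
    thus ?thesis by (simp add: PS_zero)
  qed
  have dia: "PS n (\<lambda>w. ?P ((i, i) # w)) m i i = gw n h i * ?c i"
  proof -
    have "PS n (\<lambda>w. ?P ([] @ (i, i) # w @ [])) m i i = PS n (\<lambda>w. ?P ([] @ w @ (i, i) # [])) m i i"
      using Leib[OF i i i i, of h "[]" "[]" m] by simp
    also have "\<dots> = PS n (\<lambda>w. gw n h i * ?P w) m i i"
      by (rule PS_cong) (simp add: PX_D gw_def)
    finally show ?thesis by (simp add: PS_scale)
  qed
  have up: "PS n (\<lambda>w. ?P ((i, l) # w)) m l i = ?c i - ?c l" if "i < l" "l \<in> {1..n}" for l
  proof -
    have "PS n (\<lambda>w. ?P ([] @ (i, l) # w @ [])) m l i = PS n (\<lambda>w. ?P ([] @ w @ (i, l) # [])) m l i + ?c i - ?c l"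
      using Leib[OF i that(2) i that(2), of h "[]" "[]" m] by simp
    also have "PS n (\<lambda>w. ?P ([] @ w @ (i, l) # [])) m l i = 0"
      using PS_cong[of "\<lambda>w. ?P ([] @ w @ (i, l) # [])" "\<lambda>w. 0"] PX_Z[of "(i,l)" n h] that
      by (simp add: PS_zero raising_def)
    finally show ?thesis by simp
  qed
  have "PS n ?P (Suc m) i i = (\<Sum>l\<in>{1..n}. PS n (\<lambda>w. ?P ((i, l) # w)) m l i)"
    by simp
  also have "\<dots> = (\<Sum>l\<in>{1..n}. if l < i then 0 else if l = i then gw n h i * ?c i else ?c i - ?c l)"
    by (rule sum.cong) (use low dia up in auto)
  also have "\<dots> = (\<Sum>l\<in>{1..<i}. if l < i then 0 else if l = i then gw n h i * ?c i else ?c i - ?c l)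
       + (\<Sum>l\<in>{i..<Suc n}. if l < i then 0 else if l = i then gw n h i * ?c i else ?c i - ?c l)"
  proof -
    have e: "{1..n} = {1..<Suc n}" by auto
    show ?thesis unfolding e by (rule sum.atLeastLessThan_concat[symmetric]) (use i in auto)
  qed
  also have "(\<Sum>l\<in>{1..<i}. if l < i then 0 else if l = i then gw n h i * ?c i else ?c i - ?c l) = 0"
    by simp
  also have "(\<Sum>l\<in>{i..<Suc n}. if l < i then 0 else if l = i then gw n h i * ?c i else ?c i - ?c l)
      = gw n h i * ?c i + (\<Sum>l\<in>{Suc i..<Suc n}. ?c i - ?c l)"
    using i by (subst sum.atLeast_Suc_lessThan) auto
  also have "(\<Sum>l\<in>{Suc i..<Suc n}. ?c i - ?c l) = of_nat (n - i) * ?c i - (\<Sum>l\<in>{i<..n}. ?c l)"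
  proof -
    have "{Suc i..<Suc n} = {i<..n}" by auto
    thus ?thesis by (simp add: sum_subtractf)
  qed
  finally show ?thesis by (simp add: algebra_simps)
qed

fun cc :: "nat \<Rightarrow> (nat \<Rightarrow> complex) \<Rightarrow> nat \<Rightarrow> nat \<Rightarrow> complex" where
  "cc n g 0 i = 1"
| "cc n g (Suc m) i = (g i + of_nat (n - i)) * cc n g m i - (\<Sum>l\<in>{i<..n}. cc n g m l)"

lemma PS_cc: "i \<in> {1..n} \<Longrightarrow> PS n (PX n h) m i i = cc n (gw n h) (Suc m) i"
proof (induction m arbitrary: i)
  case 0
  have "PX n h [(i, i)] = gw n h i" using PX_D[of n h "[]" i] by (simp add: PX_Nil gw_def)
  thus ?case by simp
next
  case (Suc m)
  have "(\<Sum>l\<in>{i<..n}. PS n (PX n h) m l l) = (\<Sum>l\<in>{i<..n}. cc n (gw n h) (Suc m) l)"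
    by (rule sum.cong) (use Suc.prems Suc.IH in auto)
  thus ?case using PS_diag_step[OF Suc.prems, of h m] Suc.IH[OF Suc.prems] by simp
qed

fun ow :: "nat \<Rightarrow> nat list \<Rightarrow> nat \<Rightarrow> (nat \<times> nat) list" where
  "ow i [] j = [(i, j)]"
| "ow i (x # xs) j = (i, x) # ow x xs j"

lemma length_ow: "length (ow i xs j) = Suc (length xs)"
  by (induction xs arbitrary: i) auto

lemma nth_ow: "q \<le> length xs \<Longrightarrow> ow i xs j ! q = ((i # xs) ! q, (xs @ [j]) ! q)"
proof (induction xs arbitrary: i q)
  case Nil thus ?case by simp
next
  case (Cons x xs)
  thus ?case by (cases q) auto
qed

lemma cycword_Cons: "cycword (y # ys) = ow y ys y"
proof (rule nth_equalityI)
  show "length (cycword (y # ys)) = length (ow y ys y)" by (simp add: cycword_def length_ow)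
next
  fix q assume "q < length (cycword (y # ys))"
  hence q: "q \<le> length ys" by (simp add: cycword_def)
  show "cycword (y # ys) ! q = ow y ys y ! q"
  proof (cases "q = length ys")
    case True
    thus ?thesis using q by (simp add: cycword_def nth_ow nth_append)
  next
    case False
    hence "q < length ys" using q by simp
    thus ?thesis using q by (simp add: cycword_def nth_ow nth_append)
  qed
qed

lemma sum_list_swap2: "sum_list (map (\<lambda>a. sum_list (map (\<lambda>b. f a b) L2)) L1) = sum_list (map (\<lambda>b. sum_list (map (\<lambda>a. (f a b :: complex)) L1)) L2)"
  by (rule sum_list_swap)

lemma sum_n_lists: "sum_list (map (\<lambda>ys. F (ow i ys j)) (List.n_lists m [1..<n+1])) = PS n F m i j"
proof (induction m arbitrary: F i)
  case 0 thus ?case by simp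
next
  case (Suc m)
  have "sum_list (map (\<lambda>ys. F (ow i ys j)) (List.n_lists (Suc m) [1..<n+1]))
      = sum_list (map (\<lambda>ys. sum_list (map (\<lambda>y. F ((i, y) # ow y ys j)) [1..<n+1])) (List.n_lists m [1..<n+1]))"
    by (simp add: sum_list_map_concat comp_def)
  also have "\<dots> = sum_list (map (\<lambda>y. sum_list (map (\<lambda>ys. F ((i, y) # ow y ys j)) (List.n_lists m [1..<n+1]))) [1..<n+1])"
    by (rule sum_list_swap)
  also have "\<dots> = sum_list (map (\<lambda>y. PS n (\<lambda>w. F ((i, y) # w)) m y j) [1..<n+1])"
  proof -
    have "sum_list (map (\<lambda>ys. F ((i, y) # ow y ys j)) (List.n_lists m [1..<n+1])) = PS n (\<lambda>w. F ((i, y) # w)) m y j" for y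
      using Suc.IH[of "\<lambda>w. F ((i, y) # w)" y] by simp
    thus ?thesis by presburger
  qed
  also have "\<dots> = PS n F (Suc m) i j" using sl_upt[of "\<lambda>y. PS n (\<lambda>w. F ((i, y) # w)) m y j" n] by (simp del: upt_Suc)
  finally show ?case .
qed

lemma chi_PS: "chi n mu (Suc m) = (\<Sum>i\<in>{1..n}. PS n (PX n (gl_lift n mu)) m i i)"
proof -
  let ?P = "PX n (gl_lift n mu)"
  have "chi n mu (Suc m) = sum_list (map (\<lambda>ys. sum_list (map (\<lambda>y. ?P (ow y ys y)) [1..<n+1])) (List.n_lists m [1..<n+1]))"
    by (simp add: chi_def sum_list_map_concat comp_def vcoefX_Xlift PX_def cycword_Cons)
  also have "\<dots> = sum_list (map (\<lambda>y. sum_list (map (\<lambda>ys. ?P (ow y ys y)) (List.n_lists m [1..<n+1]))) [1..<n+1])"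
    by (rule sum_list_swap)
  also have "\<dots> = (\<Sum>i\<in>{1..n}. PS n ?P m i i)"
  proof -
    have "sum_list (map (\<lambda>ys. ?P (ow y ys y)) (List.n_lists m [1..<n+1])) = PS n ?P m y y" for y
      by (rule sum_n_lists)
    hence "sum_list (map (\<lambda>y. sum_list (map (\<lambda>ys. ?P (ow y ys y)) (List.n_lists m [1..<n+1]))) [1..<n+1])
       = sum_list (map (\<lambda>y. PS n ?P m y y) [1..<n+1])" by presburger
    thus ?thesis using sl_upt[of "\<lambda>i. PS n ?P m i i" n] by simp
  qed
  finally show ?thesis .
qed

lemma chi_cc: "chi n mu (Suc m) = (\<Sum>i\<in>{1..n}. cc n (gw n (gl_lift n mu)) (Suc m) i)"
  unfolding chi_PS by (rule sum.cong) (simp_all add: PS_cc)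

unbundle fps_syntax

definition dd :: "nat \<Rightarrow> (nat \<Rightarrow> complex) \<Rightarrow> nat \<Rightarrow> complex" where
  "dd n g i = g i + of_nat (n - i)"

definition GG :: "nat \<Rightarrow> (nat \<Rightarrow> complex) \<Rightarrow> nat \<Rightarrow> complex fps" where
  "GG n g i = Abs_fps (\<lambda>m. cc n g m i)"

definition lin :: "complex \<Rightarrow> complex fps" where
  "lin c = 1 - fps_const c * fps_X"

lemma GG_rel: "GG n g i * lin (dd n g i) = 1 - fps_X * (\<Sum>j\<in>{i<..n}. GG n g j)"
proof (rule fps_ext)
  fix m
  show "(GG n g i * lin (dd n g i)) $ m = (1 - fps_X * (\<Sum>j\<in>{i<..n}. GG n g j)) $ m"
  proof (cases m)
    case 0 thus ?thesis by (simp add: GG_def lin_def)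
  next
    case (Suc m')
    have "(GG n g i * lin (dd n g i)) $ m = cc n g m i - dd n g i * cc n g m' i"
      using Suc by (simp add: lin_def GG_def algebra_simps)
    also have "\<dots> = - (\<Sum>j\<in>{i<..n}. cc n g m' j)"
      using Suc by (simp add: dd_def)
    finally show ?thesis using Suc by (simp add: fps_sum_nth GG_def)
  qed
qed

lemma gen_aux:
  "(1 - fps_X * (\<Sum>j\<in>{i..n}. GG n g j)) * (\<Prod>j\<in>{i..n}. lin (dd n g j))
   = (\<Prod>j\<in>{i..n}. lin (dd n g j + 1))"
proof (induction "Suc n - i" arbitrary: i)
  case 0
  hence "{i..n} = {}" by auto
  thus ?case by simp
next
  case (Suc t)
  hence i: "i \<le> n" by simp
  have IH: "(1 - fps_X * (\<Sum>j\<in>{Suc i..n}. GG n g j)) * (\<Prod>j\<in>{Suc i..n}. lin (dd n g j))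
     = (\<Prod>j\<in>{Suc i..n}. lin (dd n g j + 1))"
    using Suc by simp
  have e: "{i..n} = insert i {Suc i..n}" "{i<..n} = {Suc i..n}" using i by auto
  let ?A = "1 - fps_X * (\<Sum>j\<in>{Suc i..n}. GG n g j)"
  let ?Q = "\<Prod>j\<in>{Suc i..n}. lin (dd n g j)"
  let ?G = "GG n g i"
  let ?d = "dd n g i"
  have r: "?G * lin ?d = ?A" using GG_rel[of n g i] e by simp
  have "(1 - fps_X * (\<Sum>j\<in>{i..n}. GG n g j)) * (\<Prod>j\<in>{i..n}. lin (dd n g j))
      = (1 - fps_X * (?G + (\<Sum>j\<in>{Suc i..n}. GG n g j))) * (lin ?d * ?Q)"
    by (simp add: e(1))
  also have "\<dots> = ?A * ?Q * lin ?d - fps_X * (?G * lin ?d) * ?Q"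
    by (simp add: algebra_simps)
  also have "\<dots> = ?A * ?Q * (lin ?d - fps_X)" unfolding r by (simp add: algebra_simps)
  also have "lin ?d - fps_X = lin (?d + 1)" by (simp add: lin_def algebra_simps fps_const_add[symmetric])
  also have "?A * ?Q * lin (?d + 1) = (\<Prod>j\<in>{Suc i..n}. lin (dd n g j + 1)) * lin (?d + 1)"
    using IH by simp
  also have "\<dots> = (\<Prod>j\<in>{i..n}. lin (dd n g j + 1))" by (simp add: e(1))
  finally show ?case .
qed

definition LD :: "complex fps \<Rightarrow> complex fps" where
  "LD f = fps_deriv f * inverse f"

lemma LD_mult:
  assumes "f $ 0 \<noteq> 0" "g $ 0 \<noteq> 0"
  shows "LD (f * g) = LD f + LD g"
proof -
  have a: "f * inverse f = 1" "g * inverse g = 1" using inverse_mult_eq_1' assms by auto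
  have "LD (f * g) = fps_deriv f * inverse f * (g * inverse g) + fps_deriv g * inverse g * (f * inverse f)"
    by (simp add: LD_def fps_inverse_mult algebra_simps)
  thus ?thesis using a by (simp add: LD_def)
qed

lemma LD_inverse:
  assumes "f $ 0 \<noteq> 0"
  shows "LD (inverse f) = - LD f"
proof -
  have a: "inverse f * f = 1" using inverse_mult_eq_1 assms by auto
  have "LD (inverse f) = - (fps_deriv f * inverse f) * (inverse f * f)"
    using assms by (simp add: LD_def fps_inverse_deriv power2_eq_square algebra_simps)
  thus ?thesis using a by (simp add: LD_def)
qed

lemma prod_lin_0: "(\<Prod>i\<in>S. lin (c i)) $ 0 = 1"
proof (induction S rule: infinite_finite_induct)
  case (insert x F) thus ?case by (simp add: lin_def)
qed simp_all

lemma LD_prod: "finite S \<Longrightarrow> LD (\<Prod>i\<in>S. lin (c i)) = (\<Sum>i\<in>S. LD (lin (c i)))"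
proof (induction S rule: finite_induct)
  case empty thus ?case by (simp add: LD_def)
next
  case (insert x F)
  have "LD (lin (c x) * (\<Prod>i\<in>F. lin (c i))) = LD (lin (c x)) + LD (\<Prod>i\<in>F. lin (c i))"
    by (rule LD_mult) (simp add: lin_def, metis prod_lin_0 one_neq_zero)
  thus ?case using insert by simp
qed

lemma inv_lin: "inverse (lin c) = Abs_fps (\<lambda>m. c ^ m)"
proof (rule fps_inverse_unique, rule fps_ext)
  fix m
  show "(lin c * Abs_fps (\<lambda>m. c ^ m)) $ m = 1 $ m"
    by (cases m) (simp_all add: lin_def algebra_simps)
qed

lemma LD_lin_nth: "LD (lin c) $ m = - (c ^ (Suc m))"
proof -
  have "fps_deriv (lin c) = - fps_const c" by (simp add: lin_def)
  hence "LD (lin c) = - fps_const c * Abs_fps (\<lambda>m. c ^ m)" by (simp add: LD_def inv_lin)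
  thus ?thesis by simp
qed

definition low :: "nat \<Rightarrow> complex fps \<Rightarrow> bool" where
  "low k f \<longleftrightarrow> (\<forall>j<k. f $ j = 0)"

lemma low_mult: "low k f \<Longrightarrow> low k (f * g)"
  by (auto simp: low_def fps_mult_nth intro!: sum.neutral)

lemma low_mult2: "low k f \<Longrightarrow> low k (g * f)"
  using low_mult[of k f g] by (simp add: mult.commute)

lemma low_add: "low k f \<Longrightarrow> low k g \<Longrightarrow> low k (f + g)"
  by (simp add: low_def)

lemma low_deriv: "low (Suc k) f \<Longrightarrow> low k (fps_deriv f)"
  by (simp add: low_def)

lemma LD_low:
  assumes "f $ 0 \<noteq> 0" "g $ 0 \<noteq> 0" "low (Suc k) (f - g)"
  shows "low k (LD f - LD g)"
proof -
  have a: "f * inverse f = 1" "g * inverse g = 1" using inverse_mult_eq_1' assms by auto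
  have ii: "inverse f * inverse g * (g - f) = inverse f - inverse g"
  proof -
    have "inverse f * inverse g * (g - f) = inverse f * (g * inverse g) - (f * inverse f) * inverse g"
      by (simp add: algebra_simps)
    also have "\<dots> = inverse f - inverse g" using a by simp
    finally show ?thesis .
  qed
  have e0: "LD f - LD g = fps_deriv (f - g) * inverse f + fps_deriv g * (inverse f - inverse g)"
    by (simp add: LD_def algebra_simps)
  have e: "LD f - LD g = fps_deriv (f - g) * inverse f + fps_deriv g * (inverse f * inverse g * (g - f))"
    unfolding e0 ii ..
  have l1: "low k (fps_deriv (f - g))" using low_deriv[OF assms(3)] .
  have l2: "low (Suc k) (g - f)" using assms(3) by (simp add: low_def)
  hence l3: "low k (g - f)" by (simp add: low_def)
  show ?thesis unfolding e
    by (rule low_add[OF low_mult[OF l1] low_mult2[OF low_mult2[OF l3]]])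
qed

definition VV :: "nat \<Rightarrow> (nat \<Rightarrow> complex) \<Rightarrow> complex fps" where
  "VV n g = 1 - fps_X * (\<Sum>j\<in>{1..n}. GG n g j)"

lemma VV_LD_nth: "LD (VV n g) $ m = (\<Sum>i\<in>{1..n}. dd n g i ^ Suc m - (dd n g i + 1) ^ Suc m)"
proof -
  let ?E = "\<Prod>j\<in>{1..n}. lin (dd n g j)"
  let ?E1 = "\<Prod>j\<in>{1..n}. lin (dd n g j + 1)"
  have gen: "VV n g * ?E = ?E1" using gen_aux[of n g 1] by (simp add: VV_def)
  have E0: "?E $ 0 = 1" "?E1 $ 0 = 1" by (rule prod_lin_0)+
  have "VV n g = VV n g * (?E * inverse ?E)" using inverse_mult_eq_1'[of ?E] E0 by simp
  also have "\<dots> = ?E1 * inverse ?E" using gen by (simp add: mult.assoc[symmetric])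
  finally have V: "VV n g = ?E1 * inverse ?E" .
  have "LD (VV n g) = LD ?E1 - LD ?E"
    unfolding V using E0 by (simp add: LD_mult LD_inverse)
  also have "\<dots> = (\<Sum>i\<in>{1..n}. LD (lin (dd n g i + 1))) - (\<Sum>i\<in>{1..n}. LD (lin (dd n g i)))"
    by (simp add: LD_prod)
  finally show ?thesis by (simp add: fps_sum_nth LD_lin_nth sum_subtractf[symmetric])
qed

lemma key_fps:
  assumes "\<forall>m\<le>k. (\<Sum>i\<in>{1..n}. cc n g1 m i) = (\<Sum>i\<in>{1..n}. cc n g2 m i)" "m \<le> k"
  shows "(\<Sum>i\<in>{1..n}. dd n g1 i ^ Suc m - (dd n g1 i + 1) ^ Suc m)
       = (\<Sum>i\<in>{1..n}. dd n g2 i ^ Suc m - (dd n g2 i + 1) ^ Suc m)"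
proof -
  have l: "low (Suc (Suc k)) (VV n g1 - VV n g2)"
    unfolding low_def
  proof (intro allI impI)
    fix j assume j: "j < Suc (Suc k)"
    show "(VV n g1 - VV n g2) $ j = 0"
    proof (cases j)
      case 0 thus ?thesis by (simp add: VV_def)
    next
      case (Suc j')
      thus ?thesis using j assms(1) by (simp add: VV_def fps_sum_nth GG_def)
    qed
  qed
  have v0: "VV n g1 $ 0 \<noteq> 0" "VV n g2 $ 0 \<noteq> 0" by (simp_all add: VV_def)
  have "low (Suc k) (LD (VV n g1) - LD (VV n g2))" by (rule LD_low[OF v0 l])
  hence "LD (VV n g1) $ m = LD (VV n g2) $ m" using assms(2) by (simp add: low_def)
  thus ?thesis by (simp add: VV_LD_nth)
qed

unbundle fps_syntax

definition pw :: "(nat \<Rightarrow> complex) \<Rightarrow> nat set \<Rightarrow> nat \<Rightarrow> complex" where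
  "pw a S t = (\<Sum>i\<in>S. a i ^ t)"

definition psi :: "nat \<Rightarrow> complex \<Rightarrow> complex" where
  "psi m x = (x + 1) ^ Suc m - (x + 2) ^ Suc m - x ^ Suc m + (x + 1) ^ Suc m"

lemma d2_expand:
  fixes x :: complex
  shows "(x + 2) ^ (e + 2) - 2 * (x + 1) ^ (e + 2) + x ^ (e + 2)
       = (\<Sum>t\<le>e. of_nat ((e + 2) choose t) * (2 ^ (e + 2 - t) - 2) * x ^ t)"
proof -
  let ?N = "e + 2"
  let ?g = "\<lambda>t. of_nat (?N choose t) * (2 ^ (?N - t) - 2) * x ^ t :: complex"
  have b2: "(x + 2) ^ ?N = (\<Sum>t\<le>?N. of_nat (?N choose t) * x ^ t * 2 ^ (?N - t))"
    by (rule binomial_ring)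
  have b1: "(x + 1) ^ ?N = (\<Sum>t\<le>?N. of_nat (?N choose t) * x ^ t)"
    using binomial_ring[of x 1 ?N] by simp
  have "(x + 2) ^ ?N - 2 * (x + 1) ^ ?N = (\<Sum>t\<le>?N. ?g t)"
    unfolding b1 b2 sum_distrib_left sum_subtractf[symmetric]
    by (rule sum.cong) (simp_all add: algebra_simps)
  also have "\<dots> = (\<Sum>t\<le>e. ?g t) + ?g (e + 1) + ?g (e + 2)"
    by (simp add: numeral_2_eq_2)
  also have "?g (e + 1) = 0" by (simp add: numeral_2_eq_2)
  also have "?g (e + 2) = - (x ^ ?N)" by simp
  finally show ?thesis by simp
qed

lemma psi_sum:
  assumes "finite S"
  shows "(\<Sum>i\<in>S. psi (Suc e) (a i))
       = - (\<Sum>t\<le>e. of_nat ((e + 2) choose t) * (2 ^ (e + 2 - t) - 2) * pw a S t)"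
proof -
  have "psi (Suc e) x = - (\<Sum>t\<le>e. of_nat ((e + 2) choose t) * (2 ^ (e + 2 - t) - 2) * x ^ t)" for x
    using d2_expand[of x e] by (simp add: psi_def algebra_simps numeral_2_eq_2)
  hence "(\<Sum>i\<in>S. psi (Suc e) (a i)) = - (\<Sum>i\<in>S. \<Sum>t\<le>e. of_nat ((e + 2) choose t) * (2 ^ (e + 2 - t) - 2) * a i ^ t)"
    by (simp add: sum_negf)
  also have "\<dots> = - (\<Sum>t\<le>e. \<Sum>i\<in>S. of_nat ((e + 2) choose t) * (2 ^ (e + 2 - t) - 2) * a i ^ t)"
    by (subst sum.swap) simp
  also have "\<dots> = - (\<Sum>t\<le>e. of_nat ((e + 2) choose t) * (2 ^ (e + 2 - t) - 2) * pw a S t)"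
    by (simp add: pw_def sum_distrib_left)
  finally show ?thesis .
qed

lemma triangular:
  assumes "finite I" "finite J" "\<forall>m\<le>k. (\<Sum>i\<in>I. psi m (a i)) = (\<Sum>i\<in>J. psi m (a i))"
  shows "e < k \<Longrightarrow> pw a I e = pw a J e"
proof (induction e rule: less_induct)
  case (less e)
  let ?c = "\<lambda>t. of_nat ((e + 2) choose t) * (2 ^ (e + 2 - t) - 2) :: complex"
  have "(\<Sum>t\<le>e. ?c t * pw a I t) = (\<Sum>t\<le>e. ?c t * pw a J t)"
    using assms(3)[rule_format, of "Suc e"] less.prems psi_sum[OF assms(1), of e a] psi_sum[OF assms(2), of e a]
    by simp
  moreover have "(\<Sum>t<e. ?c t * pw a I t) = (\<Sum>t<e. ?c t * pw a J t)"
    using less.IH less.prems by (intro sum.cong) auto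
  ultimately have "?c e * pw a I e = ?c e * pw a J e"
    by (simp add: lessThan_Suc_atMost[symmetric])
  moreover have "?c e \<noteq> 0"
  proof -
    have "(2::complex) ^ (e + 2 - e) - 2 = 2" by simp
    moreover have "((e + 2) choose e) \<noteq> 0" by simp
    ultimately show ?thesis by simp
  qed
  ultimately show ?case by simp
qed

definition PP :: "(nat \<Rightarrow> complex) \<Rightarrow> nat set \<Rightarrow> complex fps" where
  "PP b S = (\<Prod>i\<in>S. lin (b i))"

lemma lin_mult_nth: "(lin c * f) $ Suc j = f $ Suc j - c * f $ j"
proof -
  have "lin c * f = f - fps_const c * (fps_X * f)" by (simp add: lin_def algebra_simps)
  thus ?thesis by simp
qed

lemma PP_high: "finite S \<Longrightarrow> card S < j \<Longrightarrow> PP b S $ j = 0"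
proof (induction S arbitrary: j rule: finite_induct)
  case empty thus ?case by (simp add: PP_def)
next
  case (insert x F)
  obtain j' where j: "j = Suc j'" using insert.prems by (cases j) auto
  have "PP b (insert x F) = lin (b x) * PP b F" using insert by (simp add: PP_def)
  thus ?case using insert j by (simp add: lin_mult_nth)
qed

lemma LD_PP_nth: "finite S \<Longrightarrow> LD (PP b S) $ m = - (\<Sum>i\<in>S. b i ^ Suc m)"
  by (simp add: PP_def LD_prod fps_sum_nth LD_lin_nth sum_negf)

lemma newton_core:
  assumes fin: "finite A" "finite B" and card: "card A = q" "card B = q"
    and ps: "\<forall>e. 1 \<le> e \<and> e \<le> q \<longrightarrow> (\<Sum>i\<in>A. b i ^ e) = (\<Sum>i\<in>B. b i ^ e)"
  shows "PP b A = PP b B"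
proof -
  let ?PA = "PP b A" and ?PB = "PP b B"
  have P0: "?PA $ 0 = 1" "?PB $ 0 = 1" by (simp_all add: PP_def prod_lin_0)
  have lowLD: "low q (LD ?PA - LD ?PB)"
    unfolding low_def
  proof (intro allI impI)
    fix j assume "j < q"
    hence "1 \<le> Suc j \<and> Suc j \<le> q" by simp
    hence "(\<Sum>i\<in>A. b i ^ Suc j) = (\<Sum>i\<in>B. b i ^ Suc j)" using ps by blast
    thus "(LD ?PA - LD ?PB) $ j = 0" using fin by (simp add: LD_PP_nth)
  qed
  define r where "r = ?PA * inverse ?PB"
  have r0: "r $ 0 = 1" using P0 by (simp add: r_def)
  have iB: "inverse ?PB $ 0 \<noteq> 0" using P0 by simp
  have LDr: "LD r = LD ?PA - LD ?PB"
    unfolding r_def using P0 iB by (simp add: LD_mult LD_inverse)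
  have "fps_deriv r = LD r * r"
  proof -
    have "inverse r * r = 1" using r0 inverse_mult_eq_1[of r] by simp
    thus ?thesis by (simp add: LD_def mult.assoc)
  qed
  hence ld: "low q (fps_deriv r)" using low_mult[OF lowLD[folded LDr]] by simp
  have rP: "r * ?PB = ?PA"
  proof -
    have "inverse ?PB * ?PB = 1" using P0 inverse_mult_eq_1[of ?PB] by simp
    thus ?thesis by (simp add: r_def mult.assoc)
  qed
  have lr: "low (Suc q) (r - 1)"
    unfolding low_def
  proof (intro allI impI)
    fix j assume j: "j < Suc q"
    show "(r - 1) $ j = 0"
    proof (cases j)
      case 0 thus ?thesis using r0 by simp
    next
      case (Suc j')
      have "fps_deriv r $ j' = 0" using ld j Suc by (simp add: low_def)
      hence "of_nat (Suc j') * r $ Suc j' = 0" by simp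
      hence "r $ Suc j' = 0" by (simp del: of_nat_Suc)
      thus ?thesis using Suc by simp
    qed
  qed
  have "?PA - ?PB = (r - 1) * ?PB" using rP by (simp add: algebra_simps)
  hence lowD: "low (Suc q) (?PA - ?PB)" using low_mult[OF lr] by simp
  show ?thesis
  proof (rule fps_ext)
    fix j show "?PA $ j = ?PB $ j"
    proof (cases "j \<le> q")
      case True thus ?thesis using lowD by (simp add: low_def)
    next
      case False thus ?thesis using PP_high fin card by simp
    qed
  qed
qed

lemma lin_poly: "lin c = fps_of_poly [:1, - c:]"
  by (simp add: fps_of_poly_linear' lin_def)

lemma PP_root:
  assumes fin: "finite A" "finite B" and eq: "PP b A = PP b B" and i0: "i0 \<in> A" and nz: "b i0 \<noteq> 0"
  shows "\<exists>j\<in>B. b j = b i0"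
proof -
  have "fps_of_poly (\<Prod>i\<in>A. [:1, - b i:]) = fps_of_poly (\<Prod>i\<in>B. [:1, - b i:])"
    using eq by (simp add: PP_def lin_poly fps_of_poly_prod)
  hence peq: "(\<Prod>i\<in>A. [:1, - b i:]) = (\<Prod>i\<in>B. [:1, - b i:])" by (simp add: fps_of_poly_eq_iff)
  let ?x = "inverse (b i0)"
  have z0: "poly [:1, - b i0:] ?x = 0" using nz by simp
  have "(\<Prod>i\<in>A. poly [:1, - b i:] ?x) = 0"
    using fin(1) i0 z0 by (subst prod_zero_iff) blast+
  hence "(\<Prod>i\<in>B. poly [:1, - b i:] ?x) = 0" using peq by (simp only: poly_prod[symmetric])
  then obtain j where j: "j \<in> B" "poly [:1, - b j:] ?x = 0" using fin(2) by (subst (asm) prod_zero_iff) blast+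
  hence "b j = b i0" using nz by (simp add: field_simps)
  thus ?thesis using j by blast
qed

lemma newton_final:
  fixes a :: "nat \<Rightarrow> complex"
  assumes fin: "finite A" "finite B" and card: "card A = card B" and disj: "A \<inter> B = {}"
    and i0: "i0 \<in> A" and inj: "inj_on a (A \<union> B)"
    and ps: "\<forall>e\<le>card A. pw a A e = pw a B e"
  shows False
proof -
  obtain c where c: "c \<notin> (\<lambda>i. - a i) ` A"
    using ex_new_if_finite[OF infinite_UNIV_char_0] fin by blast
  define b where "b i = a i + c" for i
  have bnz: "b i0 \<noteq> 0" using c i0 by (auto simp: b_def add_eq_0_iff)
  have shift: "(\<Sum>i\<in>S. b i ^ e) = (\<Sum>t\<le>e. of_nat (e choose t) * c ^ (e - t) * pw a S t)" for S e
  proof -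
    have "(\<Sum>i\<in>S. b i ^ e) = (\<Sum>i\<in>S. \<Sum>t\<le>e. of_nat (e choose t) * a i ^ t * c ^ (e - t))"
      unfolding b_def by (simp add: binomial_ring)
    also have "\<dots> = (\<Sum>t\<le>e. \<Sum>i\<in>S. of_nat (e choose t) * c ^ (e - t) * a i ^ t)"
      by (subst sum.swap) (simp add: ac_simps)
    also have "\<dots> = (\<Sum>t\<le>e. of_nat (e choose t) * c ^ (e - t) * pw a S t)"
      by (simp add: pw_def sum_distrib_left)
    finally show ?thesis .
  qed
  have psb: "\<forall>e. 1 \<le> e \<and> e \<le> card A \<longrightarrow> (\<Sum>i\<in>A. b i ^ e) = (\<Sum>i\<in>B. b i ^ e)"
    unfolding shift using ps by (auto intro!: sum.cong)
  have eqP: "PP b A = PP b B"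
    by (rule newton_core[OF fin refl card[symmetric] psb])
  obtain j where j: "j \<in> B" "b j = b i0" using PP_root[OF fin eqP i0 bnz] by blast
  hence "a j = a i0" by (simp add: b_def)
  moreover have "j \<noteq> i0" using j i0 disj by auto
  ultimately show False using inj j i0 by (auto dest: inj_onD)
qed

definition ind :: "nat set \<Rightarrow> nat \<Rightarrow> int" where
  "ind I i = (if i \<in> I then 1 else 0)"

lemma lambdaI_val:
  assumes "finite I" "1 \<le> i" "i \<le> n - 1"
  shows "lambdaI n I i = ind I i - ind I (Suc i)"
proof -
  have "lambdaI n I i = (\<Sum>t\<in>I. (if t = i then 1 else 0) - (if t = Suc i then 1 else 0))"
    unfolding lambdaI_def by (rule sum.cong) (use assms in \<open>auto simp: omega_def\<close>)
  also have "\<dots> = (\<Sum>t\<in>I. (if t = i then 1 else 0)) - (\<Sum>t\<in>I. (if t = Suc i then 1 else 0))"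
    by (simp add: sum_subtractf)
  also have "\<dots> = ind I i - ind I (Suc i)"
    using assms(1) by (simp add: ind_def sum.delta')
  finally show ?thesis .
qed

lemma gl_lift_I:
  assumes "finite I" "1 \<le> j" "j \<le> n"
  shows "gl_lift n (wadd nu (lambdaI n I)) j = gl_lift n nu j + of_int (ind I j) - of_int (ind I n)"
proof -
  have "(\<Sum>i\<in>{j..n-1}. lambdaI n I i) = (\<Sum>i\<in>{j..n-1}. ind I i - ind I (Suc i))"
    by (rule sum.cong) (use assms in \<open>auto simp: lambdaI_val\<close>)
  also have "\<dots> = - (\<Sum>i\<in>{j..n-1}. ind I (Suc i) - ind I i)"
    by (simp add: sum_negf[symmetric])
  also have "\<dots> = ind I j - ind I n"
    using sum_Suc_diff[of j "n - 1" "ind I"] assms by simp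
  finally have "(\<Sum>i\<in>{j..n-1}. lambdaI n I i) = ind I j - ind I n" .
  thus ?thesis by (simp add: gl_lift_def wadd_def sum.distrib)
qed

lemma sum_ind: "finite S \<Longrightarrow> I \<subseteq> S \<Longrightarrow> (\<Sum>j\<in>S. (of_int (ind I j) :: complex)) = of_nat (card I)"
proof -
  assume a: "finite S" "I \<subseteq> S"
  have "(\<Sum>j\<in>S. (of_int (ind I j) :: complex)) = (\<Sum>j\<in>S. if j \<in> I then 1 else 0)"
    by (rule sum.cong) (auto simp: ind_def)
  also have "\<dots> = (\<Sum>j\<in>S \<inter> I. 1)" using sum.inter_restrict[OF a(1), of "\<lambda>_. (1::complex)" I] by simp
  also have "S \<inter> I = I" using a by auto
  finally show ?thesis by simp
qed

lemma gw_I: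
  assumes "finite I" "I \<subseteq> {1..n}" "card I = k" "n > 0" "j \<in> {1..n}"
  shows "gw n (gl_lift n (wadd nu (lambdaI n I))) j = gw n (gl_lift n nu) j + of_int (ind I j) - of_nat k / of_nat n"
proof -
  have s: "(\<Sum>l\<in>{1..n}. gl_lift n (wadd nu (lambdaI n I)) l)
      = (\<Sum>l\<in>{1..n}. gl_lift n nu l) + of_nat k - of_nat n * of_int (ind I n)"
  proof -
    have "(\<Sum>l\<in>{1..n}. gl_lift n (wadd nu (lambdaI n I)) l)
        = (\<Sum>l\<in>{1..n}. gl_lift n nu l + of_int (ind I l) - of_int (ind I n))"
      by (rule sum.cong) (use assms in \<open>auto simp: gl_lift_I\<close>)
    also have "\<dots> = (\<Sum>l\<in>{1..n}. gl_lift n nu l) + (\<Sum>l\<in>{1..n}. (of_int (ind I l) :: complex)) - of_nat n * of_int (ind I n)"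
      by (simp add: sum.distrib sum_subtractf)
    finally show ?thesis using sum_ind[of "{1..n}" I] assms by simp
  qed
  have nz: "(of_nat n :: complex) \<noteq> 0" using assms by simp
  show ?thesis
    using assms nz unfolding gw_def s
    by (simp add: gl_lift_I field_simps)
qed

definition aa :: "nat \<Rightarrow> (nat \<Rightarrow> int) \<Rightarrow> nat \<Rightarrow> nat \<Rightarrow> complex" where
  "aa n nu k i = dd n (gw n (gl_lift n nu)) i - of_nat k / of_nat n"

lemma dd_I:
  assumes "finite I" "I \<subseteq> {1..n}" "card I = k" "n > 0" "i \<in> {1..n}"
  shows "dd n (gw n (gl_lift n (wadd nu (lambdaI n I)))) i = aa n nu k i + of_int (ind I i)"
  by (simp add: dd_def aa_def gw_I[OF assms])

lemma aa_lt:
  assumes dom: "dominant_integral n nu" and ij: "i < j" "i \<in> {1..n}" "j \<in> {1..n}"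
  shows "aa n nu k i \<noteq> aa n nu k j"
proof
  assume eq: "aa n nu k i = aa n nu k j"
  define D where "D = (\<Sum>l\<in>{i..<j}. nu l)"
  have D0: "D \<ge> 0" unfolding D_def
    by (rule sum_nonneg) (use dom ij in \<open>auto simp: dominant_integral_def\<close>)
  have split: "{i..n-1} = {i..<j} \<union> {j..n-1}" "{i..<j} \<inter> {j..n-1} = {}" using ij by auto
  have H: "(\<Sum>l\<in>{i..n-1}. nu l) = D + (\<Sum>l\<in>{j..n-1}. nu l)"
    unfolding D_def split(1) by (rule sum.union_disjoint) (use split in auto)
  have nn: "n - i = (n - j) + (j - i)" using ij by auto
  have H2: "(\<Sum>l\<in>{i..n-1}. (of_int (nu l) :: complex)) = of_int D + (\<Sum>l\<in>{j..n-1}. of_int (nu l))"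
    using arg_cong[OF H, of "of_int :: int \<Rightarrow> complex"] by (simp add: of_int_sum)
  have H3: "(\<Sum>l\<in>{i..n - Suc 0}. (of_int (nu l) :: complex)) - (\<Sum>l\<in>{j..n - Suc 0}. of_int (nu l)) = of_int D"
    using H2 by simp
  have "aa n nu k i - aa n nu k j = of_int D + of_nat (j - i)"
    by (simp add: aa_def dd_def gw_def gl_lift_def H3 nn)
  also have "\<dots> = of_int (D + int (j - i))" by simp
  finally have "of_int (D + int (j - i)) = (0 :: complex)" using eq by simp
  hence "D + int (j - i) = 0" by (simp only: of_int_eq_0_iff)
  thus False using D0 ij by simp
qed

lemma aa_inj:
  assumes "dominant_integral n nu"
  shows "inj_on (aa n nu k) {1..n}"
proof (rule inj_onI)
  fix i j assume ij: "i \<in> {1..n}" "j \<in> {1..n}" "aa n nu k i = aa n nu k j"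
  show "i = j"
  proof (rule ccontr)
    assume "i \<noteq> j"
    hence "i < j \<or> j < i" by auto
    thus False using aa_lt[OF assms, of i j k] aa_lt[OF assms, of j i k] ij by auto
  qed
qed

lemma cc_one_sum:
  assumes "n > 0"
  shows "(\<Sum>i\<in>{1..n}. cc n (gw n h) 1 i) = 0"
proof -
  have "(\<Sum>i\<in>{1..n}. cc n (gw n h) 1 i) = (\<Sum>i\<in>{1..n}. gw n h i)"
    by (rule sum.cong) simp_all
  also have "\<dots> = (\<Sum>i\<in>{1..n}. h i) - of_nat n * ((\<Sum>l\<in>{1..n}. h l) / of_nat n)"
    by (simp add: gw_def sum_subtractf)
  also have "\<dots> = 0" using assms by simp
  finally show ?thesis .
qed

lemma decomp:
  assumes "finite S" "S \<subseteq> {1..n}" "card S = k" "n > 0"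
  shows "(\<Sum>i\<in>{1..n}. dd n (gw n (gl_lift n (wadd nu (lambdaI n S)))) i ^ Suc m
            - (dd n (gw n (gl_lift n (wadd nu (lambdaI n S)))) i + 1) ^ Suc m)
       = (\<Sum>i\<in>{1..n}. aa n nu k i ^ Suc m - (aa n nu k i + 1) ^ Suc m) + (\<Sum>i\<in>S. psi m (aa n nu k i))"
proof -
  let ?a = "aa n nu k"
  have "(\<Sum>i\<in>{1..n}. dd n (gw n (gl_lift n (wadd nu (lambdaI n S)))) i ^ Suc m
            - (dd n (gw n (gl_lift n (wadd nu (lambdaI n S)))) i + 1) ^ Suc m)
      = (\<Sum>i\<in>{1..n}. (?a i ^ Suc m - (?a i + 1) ^ Suc m) + (if i \<in> S then psi m (?a i) else 0))"
  proof (rule sum.cong)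
    fix i assume i: "i \<in> {1..n}"
    have "(?a i + 1) + 1 = ?a i + 2" by simp
    thus "dd n (gw n (gl_lift n (wadd nu (lambdaI n S)))) i ^ Suc m
            - (dd n (gw n (gl_lift n (wadd nu (lambdaI n S)))) i + 1) ^ Suc m
         = (?a i ^ Suc m - (?a i + 1) ^ Suc m) + (if i \<in> S then psi m (?a i) else 0)"
      using dd_I[OF assms i, of nu] by (simp add: ind_def psi_def add.commute)
  qed simp
  also have "\<dots> = (\<Sum>i\<in>{1..n}. ?a i ^ Suc m - (?a i + 1) ^ Suc m) + (\<Sum>i\<in>{1..n}. if i \<in> S then psi m (?a i) else 0)"
    by (simp add: sum.distrib)
  also have "(\<Sum>i\<in>{1..n}. if i \<in> S then psi m (?a i) else 0) = (\<Sum>i\<in>{1..n} \<inter> S. psi m (?a i))"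
    by (rule sum.inter_restrict[symmetric]) simp
  also have "{1..n} \<inter> S = S" using assms by auto
  finally show ?thesis .
qed

theorem corollary6p4:
  fixes n k :: nat and I J :: "nat set" and nu :: "nat \<Rightarrow> int"
  assumes "1 \<le> k" and "k \<le> n - k"
    and "I \<subseteq> {1..n}" and "card I = k"
    and "J \<subseteq> {1..n}" and "card J = k"
    and "I \<noteq> J"
    and "dominant_integral n nu"
    and "dominant_integral n (wadd nu (lambdaI n I))"
    and "dominant_integral n (wadd nu (lambdaI n J))"
    and "\<forall>p. 2 \<le> p \<and> p \<le> k \<longrightarrow> fC n k p I nu = fC n k p J nu"
  shows "card (I \<inter> J) = 0"
proof (rule ccontr)
  assume r: "card (I \<inter> J) \<noteq> 0"
  have n0: "n > 0" using assms(1,2) by simp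
  have finI: "finite I" and finJ: "finite J"
    using assms(3,5) finite_subset by blast+
  let ?gI = "gw n (gl_lift n (wadd nu (lambdaI n I)))"
  let ?gJ = "gw n (gl_lift n (wadd nu (lambdaI n J)))"
  let ?a = "aa n nu k"
  have chiEq: "chi n (wadd nu (lambdaI n I)) p = chi n (wadd nu (lambdaI n J)) p" if "2 \<le> p" "p \<le> k" for p
    using assms(11) that by (simp add: fC_def)
  have ccEq: "\<forall>m\<le>k. (\<Sum>i\<in>{1..n}. cc n ?gI m i) = (\<Sum>i\<in>{1..n}. cc n ?gJ m i)"
  proof (intro allI impI)
    fix m assume m: "m \<le> k"
    show "(\<Sum>i\<in>{1..n}. cc n ?gI m i) = (\<Sum>i\<in>{1..n}. cc n ?gJ m i)"
    proof (cases "m \<le> 1")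
      case True
      hence "m = 0 \<or> m = 1" by auto
      thus ?thesis using cc_one_sum[OF n0] by auto
    next
      case False
      then obtain m' where m': "m = Suc m'" by (cases m) auto
      show ?thesis using chiEq[of m] chi_cc[of n _ m'] m m' False by simp
    qed
  qed
  have psiEq: "\<forall>m\<le>k. (\<Sum>i\<in>I. psi m (?a i)) = (\<Sum>i\<in>J. psi m (?a i))"
  proof (intro allI impI)
    fix m assume m: "m \<le> k"
    have "(\<Sum>i\<in>{1..n}. dd n ?gI i ^ Suc m - (dd n ?gI i + 1) ^ Suc m)
        = (\<Sum>i\<in>{1..n}. dd n ?gJ i ^ Suc m - (dd n ?gJ i + 1) ^ Suc m)"
      by (rule key_fps[OF ccEq m])
    thus "(\<Sum>i\<in>I. psi m (?a i)) = (\<Sum>i\<in>J. psi m (?a i))"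
      unfolding decomp[OF finI assms(3,4) n0] decomp[OF finJ assms(5,6) n0] by simp
  qed
  have pwEq: "pw ?a I e = pw ?a J e" if "e < k" for e
    by (rule triangular[OF finI finJ psiEq that])
  define A where "A = I - J"
  define B where "B = J - I"
  have finA: "finite A" "finite B" using finI finJ by (auto simp: A_def B_def)
  have cA: "card A = k - card (I \<inter> J)" using finI assms(4) by (simp add: A_def card_Diff_subset_Int)
  have cB: "card B = k - card (I \<inter> J)" using finJ assms(6) by (simp add: B_def card_Diff_subset_Int Int_commute)
  have Ane: "A \<noteq> {}"
  proof
    assume "A = {}"
    hence "I \<subseteq> J" by (auto simp: A_def)
    hence "I = J" using card_subset_eq[OF finJ] assms(4,6) by simp
    thus False using assms(7) by simp
  qed
  then obtain i0 where i0: "i0 \<in> A" by blast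
  have disj: "A \<inter> B = {}" by (auto simp: A_def B_def)
  have inj: "inj_on ?a (A \<union> B)"
    by (rule inj_on_subset[OF aa_inj[OF assms(8)]]) (use assms(3,5) in \<open>auto simp: A_def B_def\<close>)
  have ps: "\<forall>e\<le>card A. pw ?a A e = pw ?a B e"
  proof (intro allI impI)
    fix e assume e: "e \<le> card A"
    have ek: "e < k" using e cA r assms(1) by (cases "card (I \<inter> J) \<le> k") auto
    have "pw ?a I e = pw ?a (I \<inter> J) e + pw ?a A e"
      unfolding pw_def A_def by (rule sum.Int_Diff[OF finI])
    moreover have "pw ?a J e = pw ?a (I \<inter> J) e + pw ?a B e"
      unfolding pw_def B_def using sum.Int_Diff[OF finJ, of _ I] by (simp add: Int_commute)
    ultimately show "pw ?a A e = pw ?a B e" using pwEq[OF ek] by simp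
  qed
  show False by (rule newton_final[OF finA cA[folded cB] disj i0 inj ps])
qed

end
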